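(* If $G$ is a connected graph and $n\ge 1$ is an integer, then $$\dim(G)\le \dim_{n\ell}(G\odot K_n)\le n(G).$$
   Context: Graphs are finite, simple and connected; $d(u,v)$ is the shortest-path distance and $n(G)$ the number of vertices. A set $X$ of vertices resolves two vertices $u,v$ if some $x\in X$ satisfies $d(u,x)\neq d(v,x)$. $X$ is a resolving set if it resolves every pair of distinct vertices; the metric dimension $\dim(G)$ is the minimum size of a resolving set. $X$ is a nonlocal resolving set if it resolves every pair of distinct non-adjacent vertices; the nonlocal metric dimension $\dim_{n\ell}$ is the minimum size of a nonlocal resolving set. For $V(G)=\{g_1,\dots,g_{n(G)}\}$, the corona product $G\odot H$ is obtained from the disjoint union of $G$ and $n(G)$ copies $H_1,\dots,H_{n(G)}$ of $H$ by joining $g_i$ to every vertex of $H_i$ for each $i$. *)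

theory Defs
  imports Main
begin

definition simple_graph :: "'a set \<Rightarrow> ('a \<Rightarrow> 'a \<Rightarrow> bool) \<Rightarrow> bool" where
  "simple_graph V E \<longleftrightarrow> finite V \<and> (\<forall>x y. E x y \<longrightarrow> x \<in> V \<and> y \<in> V)
     \<and> (\<forall>x y. E x y \<longrightarrow> E y x) \<and> (\<forall>x. \<not> E x x)"

fun gwalk :: "('a \<Rightarrow> 'a \<Rightarrow> bool) \<Rightarrow> 'a list \<Rightarrow> bool" where
  "gwalk E [] = False"
| "gwalk E [x] = True"
| "gwalk E (x # y # xs) = (E x y \<and> gwalk E (y # xs))"

definition connected_graph :: "'a set \<Rightarrow> ('a \<Rightarrow> 'a \<Rightarrow> bool) \<Rightarrow> bool" where
  "connected_graph V E \<longleftrightarrow> V \<noteq> {} \<and>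
     (\<forall>u\<in>V. \<forall>v\<in>V. \<exists>p. gwalk E p \<and> hd p = u \<and> last p = v)"

definition gdist :: "('a \<Rightarrow> 'a \<Rightarrow> bool) \<Rightarrow> 'a \<Rightarrow> 'a \<Rightarrow> nat" where
  "gdist E u v = (LEAST k. \<exists>p. gwalk E p \<and> hd p = u \<and> last p = v \<and> length p = Suc k)"

definition resolves :: "('a \<Rightarrow> 'a \<Rightarrow> bool) \<Rightarrow> 'a set \<Rightarrow> 'a \<Rightarrow> 'a \<Rightarrow> bool" where
  "resolves E X u v \<longleftrightarrow> (\<exists>x\<in>X. gdist E u x \<noteq> gdist E v x)"

definition resolving_set :: "'a set \<Rightarrow> ('a \<Rightarrow> 'a \<Rightarrow> bool) \<Rightarrow> 'a set \<Rightarrow> bool" where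
  "resolving_set V E X \<longleftrightarrow> X \<subseteq> V \<and>
     (\<forall>u\<in>V. \<forall>v\<in>V. u \<noteq> v \<longrightarrow> resolves E X u v)"

definition nonlocal_resolving_set :: "'a set \<Rightarrow> ('a \<Rightarrow> 'a \<Rightarrow> bool) \<Rightarrow> 'a set \<Rightarrow> bool" where
  "nonlocal_resolving_set V E X \<longleftrightarrow> X \<subseteq> V \<and>
     (\<forall>u\<in>V. \<forall>v\<in>V. u \<noteq> v \<and> \<not> E u v \<longrightarrow> resolves E X u v)"

definition metric_dim :: "'a set \<Rightarrow> ('a \<Rightarrow> 'a \<Rightarrow> bool) \<Rightarrow> nat" where
  "metric_dim V E = (LEAST k. \<exists>X. resolving_set V E X \<and> card X = k)"

definition nonlocal_metric_dim :: "'a set \<Rightarrow> ('a \<Rightarrow> 'a \<Rightarrow> bool) \<Rightarrow> nat" where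
  "nonlocal_metric_dim V E = (LEAST k. \<exists>X. nonlocal_resolving_set V E X \<and> card X = k)"

(* corona product G \<odot> H: vertex Inl g is g in G, vertex Inr (g,h) is the copy of h in H_g *)
definition corona_verts :: "'a set \<Rightarrow> 'b set \<Rightarrow> ('a + 'a \<times> 'b) set" where
  "corona_verts VG VH = Inl ` VG \<union> Inr ` (VG \<times> VH)"

fun corona_edges :: "'a set \<Rightarrow> ('a \<Rightarrow> 'a \<Rightarrow> bool) \<Rightarrow> 'b set \<Rightarrow> ('b \<Rightarrow> 'b \<Rightarrow> bool)
    \<Rightarrow> ('a + 'a \<times> 'b) \<Rightarrow> ('a + 'a \<times> 'b) \<Rightarrow> bool" where
  "corona_edges VG EG VH EH (Inl a) (Inl b) = EG a b"
| "corona_edges VG EG VH EH (Inr (g, h)) (Inr (g', h')) = (g = g' \<and> g \<in> VG \<and> EH h h')"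
| "corona_edges VG EG VH EH (Inl g) (Inr (g', h)) = (g = g' \<and> g \<in> VG \<and> h \<in> VH)"
| "corona_edges VG EG VH EH (Inr (g', h)) (Inl g) = (g = g' \<and> g \<in> VG \<and> h \<in> VH)"

definition K_verts :: "nat \<Rightarrow> nat set" where "K_verts n = {0..<n}"
definition K_edges :: "nat \<Rightarrow> nat \<Rightarrow> nat \<Rightarrow> bool" where
  "K_edges n i j \<longleftrightarrow> i \<noteq> j \<and> i < n \<and> j < n"

end

theory Submission
  imports Defs
begin

definition proj :: "'a + 'a \<times> nat \<Rightarrow> 'a" where
  "proj x = (case x of Inl a \<Rightarrow> a | Inr p \<Rightarrow> fst p)"

definition cst :: "'a + 'a \<times> nat \<Rightarrow> nat" where
  "cst x = (case x of Inl a \<Rightarrow> 0 | Inr p \<Rightarrow> 1)"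

lemma proj_simps[simp]: "proj (Inl a) = a" "proj (Inr (a,b)) = a"
  "cst (Inl a) = 0" "cst (Inr (a,b)) = 1"
  by (auto simp: proj_def cst_def)

lemma gwalk_ne: "gwalk F p \<Longrightarrow> p \<noteq> []"
  by (cases p) auto

lemma gwalk_Cons: "gwalk F (x # p) \<longleftrightarrow> (p = [] \<or> (F x (hd p) \<and> gwalk F p))"
  by (cases p) auto

lemma gwalk_map: "(\<And>a b. F a b \<Longrightarrow> F' (f a) (f b)) \<Longrightarrow> gwalk F p \<Longrightarrow> gwalk F' (map f p)"
  by (induction p rule: induct_list012) auto

lemma gwalk_snoc: "gwalk F p \<Longrightarrow> F (last p) y \<Longrightarrow> gwalk F (p @ [y])"
  by (induction p rule: induct_list012) auto

lemma gdist_le: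
  assumes "gwalk F p" "hd p = a" "last p = b"
  shows "gdist F a b + 1 \<le> length p"
proof -
  have ne: "p \<noteq> []" using assms(1) gwalk_ne by blast
  have "\<exists>q. gwalk F q \<and> hd q = a \<and> last q = b \<and> length q = Suc (length p - 1)"
    using assms ne by (intro exI[of _ p]) auto
  then have "gdist F a b \<le> length p - 1" unfolding gdist_def by (rule Least_le)
  then show ?thesis using ne by (cases p) auto
qed

lemma gdist_ex:
  assumes "gwalk F p" "hd p = a" "last p = b"
  shows "\<exists>q. gwalk F q \<and> hd q = a \<and> last q = b \<and> length q = Suc (gdist F a b)"
proof -
  have ne: "p \<noteq> []" using assms(1) gwalk_ne by blast
  have "\<exists>k q. gwalk F q \<and> hd q = a \<and> last q = b \<and> length q = Suc k"
    using assms ne by (intro exI[of _ "length p - 1"] exI[of _ p]) auto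
  then show ?thesis unfolding gdist_def by (rule LeastI_ex)
qed

lemma gdist_refl: "gdist F a a = 0"
  using gdist_le[of F "[a]" a a] by simp

lemma gdist_pos:
  assumes "gwalk F p" "hd p = a" "last p = b" "a \<noteq> b"
  shows "gdist F a b \<noteq> 0"
proof
  assume "gdist F a b = 0"
  with gdist_ex[OF assms(1-3)] obtain q where "hd q = a" "last q = b" "length q = 1" by auto
  then show False using assms(4) by (cases q) auto
qed

lemma gdist_one:
  assumes "F a b" "a \<noteq> b" shows "gdist F a b = 1"
proof -
  have "gdist F a b + 1 \<le> 2" using gdist_le[of F "[a,b]" a b] assms by simp
  moreover have "gdist F a b \<noteq> 0" using gdist_pos[of F "[a,b]" a b] assms by simp
  ultimately show ?thesis by simp
qed

lemma corona_edge_cases: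
  "corona_edges V E VH EH x y \<Longrightarrow> (\<exists>a b. x = Inl a \<and> y = Inl b \<and> E a b) \<or> proj x = proj y"
  by (cases x; cases y) auto

lemma proj_walk:
  "gwalk (corona_edges V E VH EH) q \<Longrightarrow> proj (hd q) \<noteq> proj (last q) \<Longrightarrow>
   \<exists>p. gwalk E p \<and> hd p = proj (hd q) \<and> last p = proj (last q) \<and>
       length p + cst (hd q) + cst (last q) \<le> length q"
proof (induction q rule: induct_list012)
  case 1 then show ?case by simp
next
  case (2 x) then show ?case by simp
next
  case (3 x y zs)
  let ?w = "last (y # zs)"
  have ed: "corona_edges V E VH EH x y" and wy: "gwalk (corona_edges V E VH EH) (y # zs)"
    using "3.prems"(1) by auto
  have cle: "cst z \<le> 1" for z :: "'a + 'a \<times> nat" by (cases z) (auto simp: cst_def)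
  show ?case
  proof (cases "proj x = proj y")
    case True
    then have "proj y \<noteq> proj ?w" using "3.prems"(2) by simp
    with "3.IH"(2) wy obtain p where p: "gwalk E p" "hd p = proj y" "last p = proj ?w"
      "length p + cst y + cst ?w \<le> length (y # zs)" by auto
    show ?thesis using p True cle[of x]
      by (intro exI[of _ p]) auto
  next
    case False
    with corona_edge_cases[OF ed] obtain a b where ab: "x = Inl a" "y = Inl b" "E a b" by auto
    show ?thesis
    proof (cases "proj y = proj ?w")
      case False
      with "3.IH"(2) wy obtain p where p: "gwalk E p" "hd p = proj y" "last p = proj ?w"
        "length p + cst y + cst ?w \<le> length (y # zs)" by auto
      have "p \<noteq> []" using p(1) gwalk_ne by blast
      then show ?thesis using p ab
        by (intro exI[of _ "a # p"]) (auto simp: gwalk_Cons)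
    next
      case True
      have "cst ?w \<le> length zs"
      proof (cases "zs = []")
        case True then show ?thesis using ab by simp
      next
        case False then show ?thesis using cle[of ?w] by (cases zs) auto
      qed
      then show ?thesis using ab True
        by (intro exI[of _ "[a, b]"]) auto
    qed
  qed
qed

lemma gwalk_lift:
  "gwalk E p \<Longrightarrow> gwalk (corona_edges V E VH EH) (map Inl p)"
  by (rule gwalk_map) auto

lemma conn_walk:
  assumes "connected_graph V E" "g \<in> V" "h \<in> V"
  obtains p where "gwalk E p" "hd p = g" "last p = h"
  using assms unfolding connected_graph_def by blast

lemma dist_corona:
  assumes sg: "simple_graph V E" and cg: "connected_graph V E" and g: "g \<in> V" and i: "i < n"
    and x: "x \<in> corona_verts V (K_verts n)" and ne: "proj x \<noteq> g"
  shows "gdist (corona_edges V E (K_verts n) (K_edges n)) (Inr (g,i)) x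
         = gdist E g (proj x) + 1 + cst x"
proof -
  let ?H = "corona_edges V E (K_verts n) (K_edges n)"
  define h where "h = proj x"
  have h: "h \<in> V" using x unfolding h_def corona_verts_def by auto
  obtain p1 where "gwalk E p1" "hd p1 = g" "last p1 = h" using conn_walk[OF cg g h] .
  then obtain p0 where p0: "gwalk E p0" "hd p0 = g" "last p0 = h" "length p0 = Suc (gdist E g h)"
    using gdist_ex by metis
  have p0ne: "p0 \<noteq> []" using p0(1) gwalk_ne by blast
  have w1: "gwalk ?H (Inr (g,i) # map Inl p0)"
    using gwalk_lift[OF p0(1)] p0ne p0(2) g i by (auto simp: gwalk_Cons hd_map K_verts_def)
  have "\<exists>q. gwalk ?H q \<and> hd q = Inr (g,i) \<and> last q = x \<and> length q = gdist E g h + 2 + cst x"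
  proof (cases x)
    case (Inl a)
    then show ?thesis using w1 p0 p0ne unfolding h_def by (intro exI[of _ "Inr (g,i) # map Inl p0"]) (auto simp: last_map)
  next
    case (Inr b)
    then obtain a j where b: "x = Inr (a,j)" by (cases b) auto
    have aj: "a = h" "a \<in> V" "j \<in> K_verts n" using x b h unfolding h_def corona_verts_def by auto
    have "gwalk ?H ((Inr (g,i) # map Inl p0) @ [x])"
      by (rule gwalk_snoc[OF w1]) (use p0 p0ne aj b in \<open>auto simp: last_map\<close>)
    then show ?thesis using b aj p0 by (intro exI[of _ "(Inr (g,i) # map Inl p0) @ [x]"]) auto
  qed
  then obtain q0 where q0: "gwalk ?H q0" "hd q0 = Inr (g,i)" "last q0 = x" "length q0 = gdist E g h + 2 + cst x"
    by blast
  have up: "gdist ?H (Inr (g,i)) x \<le> gdist E g h + 1 + cst x"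
    using gdist_le[OF q0(1-3)] q0(4) by simp
  obtain q where q: "gwalk ?H q" "hd q = Inr (g,i)" "last q = x" "length q = Suc (gdist ?H (Inr (g,i)) x)"
    using gdist_ex[OF q0(1-3)] by blast
  obtain p where p: "gwalk E p" "hd p = g" "last p = h" "length p + 1 + cst x \<le> length q"
    using proj_walk[OF q(1)] q ne unfolding h_def by fastforce
  have "gdist E g h + 1 \<le> length p" using gdist_le[OF p(1-3)] .
  with p q up show ?thesis unfolding h_def by simp
qed

lemma walk_to_Inl:
  assumes cg: "connected_graph V E" and g: "g \<in> V" and w: "w \<in> corona_verts V (K_verts n)"
  shows "\<exists>q. gwalk (corona_edges V E (K_verts n) (K_edges n)) q \<and> hd q = w \<and> last q = Inl g"
proof -
  obtain a where a: "a \<in> V" "proj w = a" using w unfolding corona_verts_def by auto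
  obtain p where p: "gwalk E p" "hd p = a" "last p = g" using conn_walk[OF cg a(1) g] .
  have pne: "p \<noteq> []" using p(1) gwalk_ne by blast
  have wl: "gwalk (corona_edges V E (K_verts n) (K_edges n)) (map Inl p)" using gwalk_lift[OF p(1)] .
  show ?thesis
  proof (cases w)
    case (Inl b)
    then show ?thesis using a p pne wl by (intro exI[of _ "map Inl p"]) (auto simp: hd_map last_map)
  next
    case (Inr b)
    then obtain c j where cj: "w = Inr (c,j)" by (cases b) auto
    have "j \<in> K_verts n" "c = a" using w cj a unfolding corona_verts_def by auto
    then show ?thesis using cj a p pne wl
      by (intro exI[of _ "w # map Inl p"]) (auto simp: gwalk_Cons hd_map last_map)
  qed
qed

lemma upper_set:
  assumes sg: "simple_graph V E" and cg: "connected_graph V E"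
  shows "nonlocal_resolving_set (corona_verts V (K_verts n)) (corona_edges V E (K_verts n) (K_edges n)) (Inl ` V)"
  unfolding nonlocal_resolving_set_def
proof (intro conjI ballI impI)
  show "Inl ` V \<subseteq> corona_verts V (K_verts n)" by (auto simp: corona_verts_def)
next
  let ?H = "corona_edges V E (K_verts n) (K_edges n)"
  have key: "resolves ?H (Inl ` V) u v"
    if u: "u \<in> corona_verts V (K_verts n)" and v: "v \<in> corona_verts V (K_verts n)"
      and uv: "u \<noteq> v" "\<not> ?H u v" and ul: "u \<in> Inl ` V" for u v
  proof -
    obtain g where g: "g \<in> V" "u = Inl g" using ul by auto
    obtain q where "gwalk ?H q" "hd q = v" "last q = Inl g" using walk_to_Inl[OF cg g(1) v] by blast
    then have "gdist ?H v u \<noteq> 0" using gdist_pos uv g by metis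
    then show ?thesis unfolding resolves_def using g gdist_refl[of ?H u] by (intro bexI[of _ u]) auto
  qed
  fix u v assume u: "u \<in> corona_verts V (K_verts n)" and v: "v \<in> corona_verts V (K_verts n)"
    and uv: "u \<noteq> v \<and> \<not> ?H u v"
  have symH: "?H a b \<Longrightarrow> ?H b a" for a b
    using sg unfolding simple_graph_def K_edges_def by (cases a; cases b) auto
  show "resolves ?H (Inl ` V) u v"
  proof (cases "u \<in> Inl ` V")
    case True then show ?thesis using key u v uv by blast
  next
    case nu: False
    show ?thesis
    proof (cases "v \<in> Inl ` V")
      case True
      then have "resolves ?H (Inl ` V) v u" using key u v uv symH by blast
      then show ?thesis unfolding resolves_def by metis
    next
      case nv: False
      obtain g i where gi: "u = Inr (g,i)" "g \<in> V" "i < n" using u nu unfolding corona_verts_def K_verts_def by auto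
      obtain g' j where gj: "v = Inr (g',j)" "g' \<in> V" "j < n" using v nv unfolding corona_verts_def K_verts_def by auto
      have gg: "g \<noteq> g'" using uv gi gj by (auto simp: K_edges_def)
      have d1: "gdist ?H u (Inl g') = gdist E g g' + 1 + 0"
        using dist_corona[OF sg cg gi(2) gi(3), of "Inl g'"] gi gj gg by (auto simp: corona_verts_def)
      obtain p where "gwalk E p" "hd p = g" "last p = g'" using conn_walk[OF cg gi(2) gj(2)] .
      then have "gdist E g g' \<noteq> 0" using gdist_pos gg by metis
      moreover have "gdist ?H v (Inl g') = 1" using gj by (intro gdist_one) (auto simp: K_verts_def)
      ultimately show ?thesis unfolding resolves_def using d1 gj by (intro bexI[of _ "Inl g'"]) auto
    qed
  qed
qed

theorem theorem3p3:
  fixes V :: "'a set" and E :: "'a \<Rightarrow> 'a \<Rightarrow> bool" and n :: nat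
  assumes "simple_graph V E" and "connected_graph V E" and "n \<ge> 1"
  shows "metric_dim V E
           \<le> nonlocal_metric_dim (corona_verts V (K_verts n)) (corona_edges V E (K_verts n) (K_edges n))
       \<and> nonlocal_metric_dim (corona_verts V (K_verts n)) (corona_edges V E (K_verts n) (K_edges n))
           \<le> card V"
proof -
  let ?H = "corona_edges V E (K_verts n) (K_edges n)"
  let ?C = "corona_verts V (K_verts n)"
  note sg = assms(1) and cg = assms(2)
  have fin: "finite V" using sg unfolding simple_graph_def by simp
  have X0: "nonlocal_resolving_set ?C ?H (Inl ` V)" using upper_set[OF sg cg] .
  have c0: "card (Inl ` V) = card V" by (simp add: card_image)
  have ub: "nonlocal_metric_dim ?C ?H \<le> card V"
    unfolding nonlocal_metric_dim_def using X0 c0 by (intro Least_le) blast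
  have "\<exists>X. nonlocal_resolving_set ?C ?H X \<and> card X = nonlocal_metric_dim ?C ?H"
    unfolding nonlocal_metric_dim_def
    by (rule LeastI_ex[where P="\<lambda>k. \<exists>X. nonlocal_resolving_set ?C ?H X \<and> card X = k"]) (use X0 in blast)
  then obtain X where X: "nonlocal_resolving_set ?C ?H X" "card X = nonlocal_metric_dim ?C ?H" by blast
  have XC: "X \<subseteq> ?C" using X(1) unfolding nonlocal_resolving_set_def by simp
  have finC: "finite ?C" using fin by (simp add: corona_verts_def K_verts_def)
  have finX: "finite X" using finite_subset[OF XC finC] .
  define Y where "Y = proj ` X"
  have cY: "card Y \<le> card X" unfolding Y_def using card_image_le[OF finX] .
  have YV: "Y \<subseteq> V" unfolding Y_def using XC by (auto simp: corona_verts_def)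
  have "resolving_set V E Y"
    unfolding resolving_set_def
  proof (intro conjI ballI impI)
    show "Y \<subseteq> V" by (rule YV)
  next
    fix g g' assume g: "g \<in> V" and g': "g' \<in> V" and gg: "g \<noteq> g'"
    have n0: "0 < n" using assms(3) by simp
    have uC: "Inr (g,0) \<in> ?C" "Inr (g',0) \<in> ?C" using g g' n0 by (auto simp: corona_verts_def K_verts_def)
    have "Inr (g,0) \<noteq> Inr (g',0)" "\<not> ?H (Inr (g,0)) (Inr (g',0))" using gg by auto
    then have "resolves ?H X (Inr (g,0)) (Inr (g',0))"
      using X(1) uC unfolding nonlocal_resolving_set_def by (meson)
    then obtain x where x: "x \<in> X" "gdist ?H (Inr (g,0)) x \<noteq> gdist ?H (Inr (g',0)) x"
      unfolding resolves_def by blast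
    have xC: "x \<in> ?C" using x XC by auto
    have hY: "proj x \<in> Y" unfolding Y_def using x by auto
    have pos: "gdist E a b \<noteq> 0" if ab: "a \<in> V" "b \<in> V" "a \<noteq> b" for a b
    proof -
      obtain p where "gwalk E p" "hd p = a" "last p = b" using conn_walk[OF cg ab(1,2)] .
      then show ?thesis using gdist_pos ab(3) by metis
    qed
    show "resolves E Y g g'"
      unfolding resolves_def
    proof (cases "proj x = g \<or> proj x = g'")
      case True
      then show "\<exists>y\<in>Y. gdist E g y \<noteq> gdist E g' y"
      proof
        assume "proj x = g"
        then show ?thesis using hY pos[OF g' g] gg gdist_refl[of E g] by (intro bexI[of _ g]) auto
      next
        assume "proj x = g'"
        then show ?thesis using hY pos[OF g g'] gg gdist_refl[of E g'] by (intro bexI[of _ g']) auto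
      qed
    next
      case False
      have "gdist ?H (Inr (g,0)) x = gdist E g (proj x) + 1 + cst x"
        using dist_corona[OF sg cg g n0 xC] False by simp
      moreover have "gdist ?H (Inr (g',0)) x = gdist E g' (proj x) + 1 + cst x"
        using dist_corona[OF sg cg g' n0 xC] False by simp
      ultimately show "\<exists>y\<in>Y. gdist E g y \<noteq> gdist E g' y" using x(2) hY by (intro bexI[of _ "proj x"]) auto
    qed
  qed
  then have "metric_dim V E \<le> card Y"
    unfolding metric_dim_def by (intro Least_le) blast
  with cY X(2) ub show ?thesis by simp
qed

end
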